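(* Let $\mathcal T$ be a locally finite partial tessellation of ${\mathbb X}$, let $T_1,T_2$ be tiles of $\mathcal T$, and suppose $S=T_1\cap T_2$ has codimension 1. Let $H$ be the hyperplane generated by $S$. Then: (1) $H$ is an essential hyperplane of both $T_1$ and $T_2$; (2) $T_1$ and $T_2$ are contained in different closed half-spaces bounded by $H$; (3) $S^r\cap T=\emptyset$ for every tile $T$ different from $T_1$ and $T_2$; (4) $S$ is a side of $\mathcal T$.
   Context: ${\mathbb X}$ is $\mathbb R^n$, the unit sphere $\mathbb S^n$, or hyperbolic $n$-space. A subspace is a complete totally geodesic submanifold, a hyperplane one of codimension 1; closed half-spaces are closures of the two components of the complement of a hyperplane; the hyperplane generated by a set is the smallest subspace containing it (when that has codimension 1). A polyhedron is a nonempty intersection of a family of closed half-spaces whose boundary hyperplanes form a locally finite family; its codimension is that of the subspace it generates and $S^r$ is its interior in that subspace; it is thick if it has nonempty interior in ${\mathbb X}$. For a thick polyhedron $P$, a closed half-space $Z$ is essential if $P\subseteq Z$ and $P\cap\partial Z$ has nonempty interior in $\partial Z$; then $\partial Z$ is an essential hyperplane of $P$. A partial tessellation is a set of thick polyhedra (tiles) with pairwise disjoint interiors; locally finite means every compact set meets only finitely many tiles. A cell is a nonempty intersection $C$ of tiles such that for every tile $T$ either $C\subseteq T$ or $C^r\cap T=\emptyset$; a side is a cell of codimension 1. *)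

theory Defs
  imports "HOL-Analysis.Analysis"
begin

text \<open>The space X is realised inside an ambient Euclidean space of dimension n+1
  (type 'a with DIM('a) = n+1), with a fixed unit vector e:
  Euclidean n-space as the affine hyperplane x.e = 1, the unit sphere S^n,
  and hyperbolic n-space as the upper sheet of the hyperboloid
  |y|^2 - t^2 = -1 (t = x.e, y the component orthogonal to e).
  In all three models the subspaces (complete totally geodesic submanifolds)
  are exactly the nonempty intersections of X with linear subspaces.\<close>

datatype geom = Euc | Sph | Hyp

fun model :: "geom \<Rightarrow> 'a::euclidean_space \<Rightarrow> 'a set" where
  "model Euc e = {x. x \<bullet> e = 1}"
| "model Sph e = sphere 0 1"
| "model Hyp e = {x. x \<bullet> x - 2 * (x \<bullet> e)^2 = -1 \<and> x \<bullet> e > 0}"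

definition amb_dim :: "'a::euclidean_space itself \<Rightarrow> nat" where
  "amb_dim _ = DIM('a) - 1"

definition gsubspace :: "geom \<Rightarrow> 'a::euclidean_space \<Rightarrow> 'a set \<Rightarrow> bool" where
  "gsubspace g e M \<longleftrightarrow> M \<noteq> {} \<and> (\<exists>L. subspace L \<and> M = model g e \<inter> L)"

definition gdim :: "'a::euclidean_space set \<Rightarrow> nat" where
  "gdim M = dim (span M) - 1"

definition gcodim :: "'a::euclidean_space set \<Rightarrow> nat" where
  "gcodim M = amb_dim TYPE('a) - gdim M"

definition ghyperplane :: "geom \<Rightarrow> 'a::euclidean_space \<Rightarrow> 'a set \<Rightarrow> bool" where
  "ghyperplane g e H \<longleftrightarrow> gsubspace g e H \<and> gcodim H = 1"

definition gspan :: "geom \<Rightarrow> 'a::euclidean_space \<Rightarrow> 'a set \<Rightarrow> 'a set" where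
  "gspan g e A = \<Inter>{M. gsubspace g e M \<and> A \<subseteq> M}"

definition set_codim :: "geom \<Rightarrow> 'a::euclidean_space \<Rightarrow> 'a set \<Rightarrow> nat" where
  "set_codim g e P = gcodim (gspan g e P)"

definition relint_g :: "geom \<Rightarrow> 'a::euclidean_space \<Rightarrow> 'a set \<Rightarrow> 'a set" where
  "relint_g g e P = (top_of_set (gspan g e P)) interior_of P"

definition int_X :: "geom \<Rightarrow> 'a::euclidean_space \<Rightarrow> 'a set \<Rightarrow> 'a set" where
  "int_X g e P = (top_of_set (model g e)) interior_of P"

definition halfspace_of :: "geom \<Rightarrow> 'a::euclidean_space \<Rightarrow> 'a set \<Rightarrow> 'a set \<Rightarrow> bool" where
  "halfspace_of g e H Z \<longleftrightarrow> ghyperplane g e H \<and>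
     (\<exists>c \<in> model g e - H. Z = closure (connected_component_set (model g e - H) c))"

definition locfin_family :: "geom \<Rightarrow> 'a::euclidean_space \<Rightarrow> 'a set set \<Rightarrow> bool" where
  "locfin_family g e Fs \<longleftrightarrow>
     (\<forall>x \<in> model g e. \<exists>\<epsilon>>0. finite {A \<in> Fs. A \<inter> ball x \<epsilon> \<noteq> {}})"

definition polyhedron_g :: "geom \<Rightarrow> 'a::euclidean_space \<Rightarrow> 'a set \<Rightarrow> bool" where
  "polyhedron_g g e P \<longleftrightarrow> P \<noteq> {} \<and>
     (\<exists>F. (\<forall>(H, Z) \<in> F. halfspace_of g e H Z) \<and> locfin_family g e (fst ` F) \<and>
          P = model g e \<inter> \<Inter>(snd ` F))"

definition thick :: "geom \<Rightarrow> 'a::euclidean_space \<Rightarrow> 'a set \<Rightarrow> bool" where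
  "thick g e P \<longleftrightarrow> polyhedron_g g e P \<and> int_X g e P \<noteq> {}"

definition essential_hyperplane :: "geom \<Rightarrow> 'a::euclidean_space \<Rightarrow> 'a set \<Rightarrow> 'a set \<Rightarrow> bool" where
  "essential_hyperplane g e P H \<longleftrightarrow>
     (\<exists>Z. halfspace_of g e H Z \<and> P \<subseteq> Z \<and> (top_of_set H) interior_of (P \<inter> H) \<noteq> {})"

definition partial_tessellation :: "geom \<Rightarrow> 'a::euclidean_space \<Rightarrow> 'a set set \<Rightarrow> bool" where
  "partial_tessellation g e \<T> \<longleftrightarrow> (\<forall>T \<in> \<T>. thick g e T) \<and>
     (\<forall>T1 \<in> \<T>. \<forall>T2 \<in> \<T>. T1 \<noteq> T2 \<longrightarrow> int_X g e T1 \<inter> int_X g e T2 = {})"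

definition locally_finite_tess :: "geom \<Rightarrow> 'a::euclidean_space \<Rightarrow> 'a set set \<Rightarrow> bool" where
  "locally_finite_tess g e \<T> \<longleftrightarrow>
     (\<forall>K. compact K \<and> K \<subseteq> model g e \<longrightarrow> finite {T \<in> \<T>. T \<inter> K \<noteq> {}})"

definition cell :: "geom \<Rightarrow> 'a::euclidean_space \<Rightarrow> 'a set set \<Rightarrow> 'a set \<Rightarrow> bool" where
  "cell g e \<T> C \<longleftrightarrow> C \<noteq> {} \<and> (\<exists>\<S>. \<S> \<noteq> {} \<and> \<S> \<subseteq> \<T> \<and> C = \<Inter>\<S>) \<and>
     (\<forall>T \<in> \<T>. C \<subseteq> T \<or> relint_g g e C \<inter> T = {})"

definition side :: "geom \<Rightarrow> 'a::euclidean_space \<Rightarrow> 'a set set \<Rightarrow> 'a set \<Rightarrow> bool" where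
  "side g e \<T> C \<longleftrightarrow> cell g e \<T> C \<and> set_codim g e C = 1"

end

theory Submission imports Defs begin

definition UU :: "geom \<Rightarrow> 'a::euclidean_space \<Rightarrow> 'a set" where
  "UU g e = (case g of Euc \<Rightarrow> {x. x \<bullet> e > 0} | Sph \<Rightarrow> - {0}
     | Hyp \<Rightarrow> {x. x \<bullet> x - 2 * (x \<bullet> e)^2 < 0 \<and> x \<bullet> e > 0})"

definition nf :: "geom \<Rightarrow> 'a::euclidean_space \<Rightarrow> 'a \<Rightarrow> real" where
  "nf g e x = (case g of Euc \<Rightarrow> x \<bullet> e | Sph \<Rightarrow> norm x
     | Hyp \<Rightarrow> sqrt (- (x \<bullet> x - 2 * (x \<bullet> e)^2)))"

definition rn :: "geom \<Rightarrow> 'a::euclidean_space \<Rightarrow> 'a \<Rightarrow> 'a" where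
  "rn g e x = x /\<^sub>R nf g e x"

lemma nf_pos: "x \<in> UU g e \<Longrightarrow> nf g e x > 0"
  by (cases g) (auto simp: UU_def nf_def)

lemma open_UU: "open (UU g e)"
proof (cases g)
  case Euc then show ?thesis by (simp add: UU_def open_Collect_less continuous_intros)
next
  case Sph then show ?thesis by (simp add: UU_def open_Compl)
next
  case Hyp
  have "open {x::'a. x \<bullet> x - 2 * (x \<bullet> e)^2 < 0}"
    by (intro open_Collect_less continuous_intros)
  moreover have "open {x::'a. x \<bullet> e > 0}"
    by (intro open_Collect_less continuous_intros)
  ultimately show ?thesis using Hyp by (simp add: UU_def Collect_conj_eq open_Int)
qed

lemma cont_rn: "continuous_on (UU g e) (rn g e)"
proof -
  have "continuous_on (UU g e) (nf g e)"
  proof (cases g)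
    case Euc then show ?thesis by (simp add: nf_def continuous_intros)
  next
    case Sph then show ?thesis by (simp add: nf_def continuous_intros)
  next
    case Hyp then show ?thesis by (simp add: nf_def continuous_intros)
  qed
  then show ?thesis unfolding rn_def
    by (intro continuous_intros) (auto dest: nf_pos)
qed

lemma model_sub_UU: assumes "norm e = 1" shows "model g e \<subseteq> UU g e"
proof (cases g)
  case Euc then show ?thesis by (auto simp: UU_def)
next
  case Sph then show ?thesis by (auto simp: UU_def)
next
  case Hyp then show ?thesis by (auto simp: UU_def)
qed

lemma nf_model: "x \<in> model g e \<Longrightarrow> nf g e x = 1"
  by (cases g) (auto simp: nf_def)

lemma rn_model: "x \<in> model g e \<Longrightarrow> rn g e x = x"
  by (simp add: rn_def nf_model)

lemma rn_in_model: assumes "x \<in> UU g e" shows "rn g e x \<in> model g e"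
proof (cases g)
  case Euc then show ?thesis using assms by (auto simp: UU_def nf_def rn_def)
next
  case Sph then show ?thesis using assms by (auto simp: UU_def nf_def rn_def)
next
  case Hyp
  let ?q = "x \<bullet> x - 2 * (x \<bullet> e)^2"
  have q: "?q < 0" "x \<bullet> e > 0" using assms Hyp by (auto simp: UU_def)
  define s where "s = sqrt (- ?q)"
  have s: "s > 0" "s^2 = - ?q" using q by (auto simp: s_def)
  have "(x /\<^sub>R s) \<bullet> (x /\<^sub>R s) - 2 * ((x /\<^sub>R s) \<bullet> e)^2
      = ?q / s^2"
    using s by (simp add: power2_eq_square field_simps)
  also have "\<dots> = ?q / (- ?q)" using s by simp
  also have "\<dots> = -1" using q(1) by (simp add: field_simps)
  finally have "(x /\<^sub>R s) \<bullet> (x /\<^sub>R s) - 2 * ((x /\<^sub>R s) \<bullet> e)^2 = -1" .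
  moreover have "(x /\<^sub>R s) \<bullet> e > 0" using s q by simp
  ultimately show ?thesis using Hyp by (simp add: rn_def nf_def s_def)
qed

lemma rn_scale: "x \<in> UU g e \<Longrightarrow> \<exists>c>0. rn g e x = c *\<^sub>R x"
  using nf_pos[of x g e] by (auto simp: rn_def intro!: exI[of _ "inverse (nf g e x)"])

lemma zero_notin_model: "0 \<notin> model g e"
  by (cases g) auto

lemma closed_model: "closed (model g e)"
proof (cases g)
  case Euc then show ?thesis by (simp add: closed_Collect_eq continuous_intros)
next
  case Sph then show ?thesis by simp
next
  case Hyp
  have eq: "model g e = {x. x \<bullet> x - 2 * (x \<bullet> e)^2 = -1} \<inter> {x. x \<bullet> e \<ge> 0}"
  proof -
    have "x \<bullet> e > 0" if "x \<bullet> x - 2 * (x \<bullet> e)^2 = -1" "x \<bullet> e \<ge> 0" for x :: 'a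
    proof -
      have "(x \<bullet> e)^2 > 0" using that inner_ge_zero[of x] by linarith
      then show ?thesis using that by (cases "x \<bullet> e = 0") auto
    qed
    then show ?thesis using Hyp by auto
  qed
  show ?thesis unfolding eq
    by (intro closed_Int closed_Collect_eq closed_Collect_le continuous_intros)
qed

lemma UU_scale: "x \<in> UU g e \<Longrightarrow> c > 0 \<Longrightarrow> c *\<^sub>R x \<in> UU g e"
  by (cases g) (auto simp: UU_def power_mult_distrib mult_less_0_iff algebra_simps power2_eq_square)

lemma convex_UU_Hyp:
  assumes ne: "norm e = 1"
  shows "convex (UU Hyp e)"
proof -
  have eq: "x \<in> UU Hyp e \<longleftrightarrow> x \<bullet> e > 0 \<and> norm (x - (x \<bullet> e) *\<^sub>R e) < x \<bullet> e" for x
  proof -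
    have ee: "e \<bullet> e = 1" using ne by (simp add: dot_square_norm)
    have "(norm (x - (x \<bullet> e) *\<^sub>R e))^2 = (x - (x \<bullet> e) *\<^sub>R e) \<bullet> (x - (x \<bullet> e) *\<^sub>R e)"
      by (rule power2_norm_eq_inner)
    also have "\<dots> = x \<bullet> x - (x \<bullet> e)^2"
      by (simp add: inner_diff_left inner_diff_right ee inner_commute power2_eq_square)
    finally have "(norm (x - (x \<bullet> e) *\<^sub>R e))^2 = x \<bullet> x - (x \<bullet> e)^2" .
    then have "x \<bullet> x - 2 * (x \<bullet> e)^2 < 0 \<longleftrightarrow> (norm (x - (x \<bullet> e) *\<^sub>R e))^2 < (x \<bullet> e)^2"
      by simp
    moreover have "x \<bullet> e > 0 \<Longrightarrow> (norm (x - (x \<bullet> e) *\<^sub>R e))^2 < (x \<bullet> e)^2 \<longleftrightarrow> norm (x - (x \<bullet> e) *\<^sub>R e) < x \<bullet> e"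
    proof -
      assume p: "x \<bullet> e > 0"
      have "\<bar>x \<bullet> e\<bar> \<le> \<bar>norm (x - (x \<bullet> e) *\<^sub>R e)\<bar> \<longleftrightarrow> (x \<bullet> e)^2 \<le> (norm (x - (x \<bullet> e) *\<^sub>R e))^2"
        by (rule abs_le_square_iff)
      then show ?thesis using p by (simp add: not_le[symmetric])
    qed
    ultimately show ?thesis by (auto simp: UU_def)
  qed
  show ?thesis unfolding convex_def
  proof (intro ballI allI impI)
    fix x y :: 'a and u v :: real
    assume x: "x \<in> UU Hyp e" and y: "y \<in> UU Hyp e" and uv: "0 \<le> u" "0 \<le> v" "u + v = 1"
    let ?P = "\<lambda>x. x - (x \<bullet> e) *\<^sub>R e"
    have px: "norm (?P x) < x \<bullet> e" "x \<bullet> e > 0" and py: "norm (?P y) < y \<bullet> e" "y \<bullet> e > 0"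
      using x y eq by auto
    have P: "?P (u *\<^sub>R x + v *\<^sub>R y) = u *\<^sub>R ?P x + v *\<^sub>R ?P y"
      by (simp add: algebra_simps inner_add_left)
    have "norm (?P (u *\<^sub>R x + v *\<^sub>R y)) \<le> u * norm (?P x) + v * norm (?P y)"
      unfolding P using norm_triangle_ineq[of "u *\<^sub>R ?P x" "v *\<^sub>R ?P y"] uv by simp
    also have "\<dots> < u * (x \<bullet> e) + v * (y \<bullet> e)"
    proof (cases "u = 0")
      case True then show ?thesis using uv py by simp
    next
      case False then have "u > 0" using uv by simp
      then have "u * norm (?P x) < u * (x \<bullet> e)" using px by simp
      moreover have "v * norm (?P y) \<le> v * (y \<bullet> e)" using py uv by (simp add: mult_left_mono)
      ultimately show ?thesis by linarith
    qed
    also have "\<dots> = (u *\<^sub>R x + v *\<^sub>R y) \<bullet> e" by (simp add: inner_add_left)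
    finally have "norm (?P (u *\<^sub>R x + v *\<^sub>R y)) < (u *\<^sub>R x + v *\<^sub>R y) \<bullet> e" .
    moreover then have "(u *\<^sub>R x + v *\<^sub>R y) \<bullet> e > 0" using norm_ge_zero less_le_trans by (meson le_less_trans)
    ultimately show "u *\<^sub>R x + v *\<^sub>R y \<in> UU Hyp e" using eq by blast
  qed
qed

lemma convex_UU_pos:
  assumes ne: "norm e = 1" and a: "a \<noteq> 0"
  shows "convex (UU g e \<inter> {x. a \<bullet> x > 0})"
proof (cases g)
  case Euc
  have "UU g e \<inter> {x. a \<bullet> x > 0} = {x. e \<bullet> x > 0} \<inter> {x. a \<bullet> x > 0}"
    using Euc by (auto simp: UU_def inner_commute)
  then show ?thesis by (simp add: convex_Int convex_halfspace_gt)
next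
  case Sph
  then have "UU g e \<inter> {x. a \<bullet> x > 0} = {x. a \<bullet> x > 0}" by (auto simp: UU_def)
  then show ?thesis by (simp add: convex_halfspace_gt)
next
  case Hyp then show ?thesis using convex_UU_Hyp[OF ne]
    by (simp add: convex_Int convex_halfspace_gt)
qed

lemma UU_add_Hyp:
  assumes ne: "norm e = 1" and "x \<in> UU Hyp e" "y \<in> UU Hyp e"
  shows "x + y \<in> UU Hyp e"
proof -
  have "(1/2) *\<^sub>R x + (1/2) *\<^sub>R y \<in> UU Hyp e"
    using convex_UU_Hyp[OF ne] assms unfolding convex_def by (metis field_sum_of_halves zero_le_divide_iff zero_le_one zero_le_numeral)
  from UU_scale[OF this, of 2] show ?thesis by (simp add: algebra_simps)
qed

context
  fixes g :: geom and e :: "'a::euclidean_space"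
  assumes ne: "norm e = 1"
begin

lemma ball_rn:
  assumes x: "x \<in> model g e" and O: "open W" "x \<in> W"
  shows "\<exists>\<epsilon>>0. \<forall>z. dist z x < \<epsilon> \<longrightarrow> z \<in> UU g e \<and> rn g e z \<in> W"
proof -
  have xU: "x \<in> UU g e" using model_sub_UU[OF ne] x by auto
  obtain r where r: "r > 0" "ball x r \<subseteq> W" using O open_contains_ball by blast
  obtain d where d: "d > 0" "\<forall>z\<in>UU g e. dist z x < d \<longrightarrow> dist (rn g e z) (rn g e x) < r"
    using cont_rn[of g e] xU r unfolding continuous_on_iff by blast
  obtain d' where d': "d' > 0" "ball x d' \<subseteq> UU g e" using open_UU xU open_contains_ball by blast
  show ?thesis
  proof (intro exI[of _ "min d d'"] conjI allI impI)
    fix z assume z: "dist z x < min d d'"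
    show zU: "z \<in> UU g e" using z d' by (auto simp: dist_commute)
    have "dist (rn g e z) x < r" using d zU z rn_model[OF x] by auto
    then show "rn g e z \<in> W" using r by (auto simp: dist_commute)
  qed (use d d' in auto)
qed

lemma push:
  assumes x: "x \<in> model g e" and O: "open W" "x \<in> W"
  shows "\<exists>y\<in>model g e \<inter> W. \<exists>k>0. \<exists>t>0. y = k *\<^sub>R (x + t *\<^sub>R c)"
proof -
  obtain \<epsilon> where \<epsilon>: "\<epsilon> > 0" "\<forall>z. dist z x < \<epsilon> \<longrightarrow> z \<in> UU g e \<and> rn g e z \<in> W"
    using ball_rn[OF assms] by blast
  define t where "t = \<epsilon> / (2 * (norm c + 1))"
  have "2 * (norm c + 1) > 0" by (smt (verit) norm_ge_zero)
  then have t: "t > 0" using \<epsilon> by (simp add: t_def)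
  have "t * norm c < \<epsilon>"
  proof -
    have "t * norm c \<le> t * (norm c + 1)" using t by simp
    also have "\<dots> = \<epsilon> / 2" unfolding t_def using \<open>2 * (norm c + 1) > 0\<close> by (simp add: field_simps)
    finally show ?thesis using \<epsilon> by simp
  qed
  then have "dist (x + t *\<^sub>R c) x < \<epsilon>" using t by (simp add: dist_norm)
  then have z: "x + t *\<^sub>R c \<in> UU g e" "rn g e (x + t *\<^sub>R c) \<in> W" using \<epsilon> by auto
  obtain k where k: "k > 0" "rn g e (x + t *\<^sub>R c) = k *\<^sub>R (x + t *\<^sub>R c)" using rn_scale[OF z(1)] by blast
  show ?thesis using z k t rn_in_model[OF z(1)] by (intro bexI[of _ "rn g e (x + t *\<^sub>R c)"]) auto
qed

lemma both_sides:
  assumes x: "x \<in> model g e" and O: "open W" "x \<in> W" and a: "a \<noteq> 0" and ax: "a \<bullet> x = 0"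
  shows "(\<exists>y\<in>model g e \<inter> W. a \<bullet> y > 0) \<and> (\<exists>y\<in>model g e \<inter> W. a \<bullet> y < 0)"
proof
  obtain y k t where y: "y \<in> model g e \<inter> W" "k > 0" "t > 0" "y = k *\<^sub>R (x + t *\<^sub>R a)"
    using push[OF assms(1-3), of a] by blast
  have "a \<bullet> y = k * t * (a \<bullet> a)" using y ax by (simp add: inner_add_right)
  then show "\<exists>y\<in>model g e \<inter> W. a \<bullet> y > 0" using y a by (intro bexI[of _ y]) auto
next
  obtain y k t where y: "y \<in> model g e \<inter> W" "k > 0" "t > 0" "y = k *\<^sub>R (x + t *\<^sub>R (-a))"
    using push[OF assms(1-3), of "-a"] by blast
  have "a \<bullet> y = - (k * t * (a \<bullet> a))" using y ax by (simp add: inner_add_right inner_diff_right)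
  then show "\<exists>y\<in>model g e \<inter> W. a \<bullet> y < 0" using y a by (intro bexI[of _ y]) auto
qed

lemma conn_pos:
  assumes a: "a \<noteq> 0"
  shows "connected (model g e \<inter> {x. a \<bullet> x > 0})"
proof -
  have "rn g e ` (UU g e \<inter> {x. a \<bullet> x > 0}) = model g e \<inter> {x. a \<bullet> x > 0}"
  proof
    show "rn g e ` (UU g e \<inter> {x. a \<bullet> x > 0}) \<subseteq> model g e \<inter> {x. a \<bullet> x > 0}"
    proof
      fix y assume "y \<in> rn g e ` (UU g e \<inter> {x. a \<bullet> x > 0})"
      then obtain z where z: "z \<in> UU g e" "a \<bullet> z > 0" "y = rn g e z" by auto
      obtain k where "k > 0" "rn g e z = k *\<^sub>R z" using rn_scale[OF z(1)] by blast
      then show "y \<in> model g e \<inter> {x. a \<bullet> x > 0}" using rn_in_model[OF z(1)] z by auto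
    qed
    show "model g e \<inter> {x. a \<bullet> x > 0} \<subseteq> rn g e ` (UU g e \<inter> {x. a \<bullet> x > 0})"
      using model_sub_UU[OF ne] rn_model by (force simp: image_iff)
  qed
  moreover have "connected (rn g e ` (UU g e \<inter> {x. a \<bullet> x > 0}))"
  proof (rule connected_continuous_image)
    show "continuous_on (UU g e \<inter> {x. a \<bullet> x > 0}) (rn g e)"
      by (rule continuous_on_subset[OF cont_rn]) auto
    show "connected (UU g e \<inter> {x. a \<bullet> x > 0})"
      by (rule convex_connected[OF convex_UU_pos[OF ne a]])
  qed
  ultimately show ?thesis by simp
qed

lemma closure_pos:
  assumes a: "a \<noteq> 0"
  shows "closure (model g e \<inter> {x. a \<bullet> x > 0}) = model g e \<inter> {x. a \<bullet> x \<ge> 0}"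
proof
  have "closed (model g e \<inter> {x. a \<bullet> x \<ge> 0})"
    by (intro closed_Int closed_model closed_Collect_le continuous_intros)
  then show "closure (model g e \<inter> {x. a \<bullet> x > 0}) \<subseteq> model g e \<inter> {x. a \<bullet> x \<ge> 0}"
    by (intro closure_minimal) auto
  show "model g e \<inter> {x. a \<bullet> x \<ge> 0} \<subseteq> closure (model g e \<inter> {x. a \<bullet> x > 0})"
  proof
    fix x assume x: "x \<in> model g e \<inter> {x. a \<bullet> x \<ge> 0}"
    show "x \<in> closure (model g e \<inter> {x. a \<bullet> x > 0})"
    proof (cases "a \<bullet> x = 0")
      case False then show ?thesis using x closure_subset by fastforce
    next
      case True
      show ?thesis unfolding closure_approachable
      proof (intro allI impI)
        fix r :: real assume r: "r > 0"
        obtain y where "y \<in> model g e \<inter> ball x r" "a \<bullet> y > 0"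
          using both_sides[of x "ball x r" a] x r a True by auto
        then show "\<exists>y\<in>model g e \<inter> {x. a \<bullet> x > 0}. dist y x < r" by (auto simp: dist_commute)
      qed
    qed
  qed
qed

lemma comp_pos:
  assumes a: "a \<noteq> 0" and c: "c \<in> model g e" "a \<bullet> c > 0"
  shows "connected_component_set (model g e - model g e \<inter> {x. a \<bullet> x = 0}) c
       = model g e \<inter> {x. a \<bullet> x > 0}"
proof
  show "model g e \<inter> {x. a \<bullet> x > 0} \<subseteq> connected_component_set (model g e - model g e \<inter> {x. a \<bullet> x = 0}) c"
    by (rule connected_component_maximal) (use c conn_pos[OF a] in auto)
  show "connected_component_set (model g e - model g e \<inter> {x. a \<bullet> x = 0}) c \<subseteq> model g e \<inter> {x. a \<bullet> x > 0}"
  proof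
    fix y assume y: "y \<in> connected_component_set (model g e - model g e \<inter> {x. a \<bullet> x = 0}) c"
    let ?C = "connected_component_set (model g e - model g e \<inter> {x. a \<bullet> x = 0}) c"
    have sub: "?C \<subseteq> model g e - model g e \<inter> {x. a \<bullet> x = 0}" by (rule connected_component_subset)
    have cC: "c \<in> ?C" using c by auto
    have "a \<bullet> y > 0"
    proof (rule ccontr)
      assume "\<not> a \<bullet> y > 0"
      then have "a \<bullet> y \<le> 0" by simp
      then obtain z where "z \<in> ?C" "a \<bullet> z = 0"
        using connected_ivt_hyperplane[of ?C y c a 0] y cC c by auto
      then show False using sub by auto
    qed
    then show "y \<in> model g e \<inter> {x. a \<bullet> x > 0}" using y sub by auto
  qed
qed



lemma gsub_hyp:
  assumes M: "gsubspace g e M" and c: "gcodim M = 1"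
  shows "\<exists>a. a \<noteq> 0 \<and> M = model g e \<inter> {x. a \<bullet> x = 0} \<and> span M = {x. a \<bullet> x = 0}"
proof -
  obtain L where L: "subspace L" "M = model g e \<inter> L" "M \<noteq> {}" using M unfolding gsubspace_def by blast
  have "span M \<subseteq> L" using L by (intro span_minimal) auto
  then have Meq: "M = model g e \<inter> span M" using L span_superset[of M] by auto
  have d1: "dim M \<noteq> 0"
  proof
    assume "dim M = 0" then have "M \<subseteq> {0}" by simp
    then show False using L zero_notin_model[of g e] by auto
  qed
  have d2: "dim M \<le> DIM('a)" using dim_subset_UNIV[of M] by simp
  have "DIM('a) - 1 - (dim M - 1) = 1" using c by (simp add: gcodim_def gdim_def amb_dim_def)
  then have d: "dim M = DIM('a) - 1" "dim M < DIM('a)" using d1 d2 by auto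
  obtain a :: 'a where a: "a \<noteq> 0" "span M \<subseteq> {x. a \<bullet> x = 0}" using lowdim_subset_hyperplane[OF d(2)] by blast
  have "span M = {x. a \<bullet> x = 0}"
    by (rule subspace_dim_equal) (use a d dim_hyperplane[OF a(1)] subspace_hyperplane in auto)
  then show ?thesis using a Meq by auto
qed

lemma halfspace_char:
  assumes "halfspace_of g e H Z"
  shows "\<exists>a. a \<noteq> 0 \<and> H = model g e \<inter> {x. a \<bullet> x = 0} \<and> Z = model g e \<inter> {x. a \<bullet> x \<ge> 0}"
proof -
  obtain c where c: "c \<in> model g e - H" "Z = closure (connected_component_set (model g e - H) c)"
    and hyp: "ghyperplane g e H" using assms unfolding halfspace_of_def by blast
  obtain a where a: "a \<noteq> 0" "H = model g e \<inter> {x. a \<bullet> x = 0}"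
    using gsub_hyp hyp unfolding ghyperplane_def by blast
  show ?thesis
  proof (cases "a \<bullet> c > 0")
    case True
    then show ?thesis using a c comp_pos[OF a(1), of c] closure_pos[OF a(1)] by auto
  next
    case False
    then have "(-a) \<bullet> c > 0" using c a by auto
    moreover have "H = model g e \<inter> {x. (-a) \<bullet> x = 0}" using a by auto
    ultimately show ?thesis using a c comp_pos[of "-a" c] closure_pos[of "-a"]
      by (intro exI[of _ "-a"]) auto
  qed
qed

lemma halfspace_intro:
  assumes hyp: "ghyperplane g e H" and a: "a \<noteq> 0" and H: "H = model g e \<inter> {x. a \<bullet> x = 0}"
  shows "halfspace_of g e H (model g e \<inter> {x. a \<bullet> x \<ge> 0})"
proof -
  obtain x where x: "x \<in> H" using hyp unfolding ghyperplane_def gsubspace_def by blast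
  obtain c where c: "c \<in> model g e" "a \<bullet> c > 0" using both_sides[of x UNIV a] x H a by auto
  show ?thesis unfolding halfspace_of_def
    using hyp c H comp_pos[OF a c] closure_pos[OF a] by (intro conjI bexI[of _ c]) auto
qed

lemma gspan_eq:
  assumes "S \<noteq> {}" "S \<subseteq> model g e"
  shows "gspan g e S = model g e \<inter> span S"
proof
  have "gsubspace g e (model g e \<inter> span S)" unfolding gsubspace_def
    using assms span_superset[of S] by (intro conjI exI[of _ "span S"]) auto
  then show "gspan g e S \<subseteq> model g e \<inter> span S" unfolding gspan_def
    using assms span_superset[of S] by auto
  show "model g e \<inter> span S \<subseteq> gspan g e S" unfolding gspan_def
  proof (intro Inter_greatest, clarify)
    fix M y assume M: "gsubspace g e M" "S \<subseteq> M" and y: "y \<in> model g e" "y \<in> span S"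
    obtain L where L: "subspace L" "M = model g e \<inter> L" using M unfolding gsubspace_def by blast
    have "span S \<subseteq> L" using L M by (intro span_minimal) auto
    then show "y \<in> M" using y L by auto
  qed
qed

lemma near:
  assumes F: "\<forall>(H', Z')\<in>F. halfspace_of g e H' Z'" and lf: "locfin_family g e (fst ` F)"
    and x: "x \<in> model g e" and xZ: "\<forall>(H', Z')\<in>F. x \<in> Z'"
  shows "\<exists>\<delta>>0. \<forall>(H', Z')\<in>F. x \<notin> H' \<longrightarrow> model g e \<inter> ball x \<delta> \<subseteq> Z' - H'"
proof -
  obtain \<epsilon>0 where e0: "\<epsilon>0 > 0" "finite {A \<in> fst ` F. A \<inter> ball x \<epsilon>0 \<noteq> {}}"
    using lf x unfolding locfin_family_def by blast
  define N where "N = {A \<in> fst ` F. A \<inter> ball x \<epsilon>0 \<noteq> {} \<and> x \<notin> A}"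
  have finN: "finite N" using e0(2) unfolding N_def by (rule rev_finite_subset) auto
  have clA: "closed A" if A: "A \<in> fst ` F" for A
  proof -
    obtain Z where "(A, Z) \<in> F" using A by force
    then obtain a where "A = model g e \<inter> {x. a \<bullet> x = 0}" using halfspace_char F by blast
    then show ?thesis by (simp add: closed_Int closed_model closed_hyperplane)
  qed
  have "closed (\<Union>N)" using finN clA by (intro closed_Union) (auto simp: N_def)
  moreover have "x \<notin> \<Union>N" by (auto simp: N_def)
  ultimately obtain \<rho> where rho: "\<rho> > 0" "ball x \<rho> \<subseteq> - \<Union>N"
    using open_contains_ball[of "- \<Union>N"] open_Compl[of "\<Union>N"] by blast
  define \<delta>0 where "\<delta>0 = min \<epsilon>0 \<rho>"
  have d0: "\<delta>0 > 0" using rho e0 by (simp add: \<delta>0_def)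
  have far: "A \<inter> ball x \<delta>0 = {}" if "A \<in> fst ` F" "x \<notin> A" for A
  proof (cases "A \<inter> ball x \<epsilon>0 = {}")
    case True then show ?thesis by (auto simp: \<delta>0_def)
  next
    case False then have "A \<in> N" using that by (auto simp: N_def)
    then show ?thesis using rho by (auto simp: \<delta>0_def)
  qed
  obtain \<delta> where d: "\<delta> > 0" "\<forall>z. dist z x < \<delta> \<longrightarrow> z \<in> UU g e \<and> rn g e z \<in> ball x \<delta>0"
    using ball_rn[OF x, of "ball x \<delta>0"] d0 by auto
  have key: "y \<in> Z' - H'" if HZ: "(H', Z') \<in> F" and xH: "x \<notin> H'" and y: "y \<in> model g e" "y \<in> ball x \<delta>" for H' Z' y
  proof -
    obtain a where a: "a \<noteq> 0" "H' = model g e \<inter> {x. a \<bullet> x = 0}" "Z' = model g e \<inter> {x. a \<bullet> x \<ge> 0}"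
      using halfspace_char F HZ by blast
    have ax: "a \<bullet> x > 0" using xZ HZ xH a x by force
    have ay: "a \<bullet> y > 0"
    proof (rule ccontr)
      assume "\<not> a \<bullet> y > 0"
      then have ay: "a \<bullet> y \<le> 0" by simp
      define s where "s = a \<bullet> x - a \<bullet> y"
      have s: "s > 0" using ax ay by (simp add: s_def)
      define u where "u = (a \<bullet> x) / s"
      have u: "0 < u" "u \<le> 1" using ax ay s by (auto simp: u_def s_def field_simps)
      define z where "z = u *\<^sub>R y + (1 - u) *\<^sub>R x"
      have az: "a \<bullet> z = 0"
      proof -
        have "a \<bullet> z = u * (a \<bullet> y) + (1 - u) * (a \<bullet> x)" by (simp add: z_def inner_add_right)
        also have "\<dots> = ((a \<bullet> x) * (a \<bullet> y) + (s - a \<bullet> x) * (a \<bullet> x)) / s"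
          using s by (simp add: u_def field_simps)
        also have "\<dots> = 0" by (simp add: s_def algebra_simps)
        finally show ?thesis .
      qed
      have "z - x = u *\<^sub>R (y - x)" by (simp add: z_def algebra_simps)
      then have "dist z x = u * dist y x" using u by (simp add: dist_norm)
      also have "\<dots> \<le> dist y x" using u by (simp add: mult_left_le_one_le)
      also have "\<dots> < \<delta>" using y by (simp add: dist_commute)
      finally have "z \<in> UU g e" "rn g e z \<in> ball x \<delta>0" using d by auto
      moreover obtain k where "k > 0" "rn g e z = k *\<^sub>R z" using rn_scale[OF \<open>z \<in> UU g e\<close>] by blast
      ultimately have "rn g e z \<in> H' \<inter> ball x \<delta>0" using az a rn_in_model[of z g e] by auto
      then show False using far[of H'] HZ xH by force
    qed
    show "y \<in> Z' - H'" using ay y a by auto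
  qed
  show ?thesis using d(1) key by blast
qed

lemma int_pos:
  assumes F: "\<forall>(H', Z')\<in>F. halfspace_of g e H' Z'" and T: "T = model g e \<inter> \<Inter>(snd ` F)"
    and q: "q \<in> int_X g e T"
  shows "\<forall>(H', Z')\<in>F. q \<in> Z' - H'"
proof -
  have key: "q \<in> Z' \<and> q \<notin> H'" if HZ: "(H', Z') \<in> F" for H' Z'
  proof
  obtain V where V: "openin (top_of_set (model g e)) V" "q \<in> V" "V \<subseteq> T"
    using q unfolding int_X_def interior_of_def by blast
  obtain W where W: "open W" "V = model g e \<inter> W" using V(1) openin_open by blast
  obtain a where a: "a \<noteq> 0" "H' = model g e \<inter> {x. a \<bullet> x = 0}" "Z' = model g e \<inter> {x. a \<bullet> x \<ge> 0}"
    using halfspace_char F HZ by blast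
  have TZ: "T \<subseteq> Z'" using T HZ by force
  show "q \<in> Z'" using V TZ by auto
  show "q \<notin> H'"
  proof
    assume "q \<in> H'"
    then obtain y where "y \<in> model g e \<inter> W" "a \<bullet> y < 0"
      using both_sides[of q W a] a W V by auto
    then show False using W V TZ a by auto
  qed
  qed
  then show ?thesis by blast
qed

lemma allpos_int:
  assumes F: "\<forall>(H', Z')\<in>F. halfspace_of g e H' Z'" and lf: "locfin_family g e (fst ` F)"
    and T: "T = model g e \<inter> \<Inter>(snd ` F)"
    and y: "y \<in> model g e" and yp: "\<forall>(H', Z')\<in>F. y \<in> Z' - H'"
  shows "y \<in> int_X g e T"
proof -
  obtain \<delta> where d: "\<delta> > 0" "\<forall>(H', Z')\<in>F. y \<notin> H' \<longrightarrow> model g e \<inter> ball y \<delta> \<subseteq> Z' - H'"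
    using near[OF F lf y] yp by fastforce
  have "model g e \<inter> ball y \<delta> \<subseteq> T" using d yp T by fastforce
  moreover have "openin (top_of_set (model g e)) (model g e \<inter> ball y \<delta>)" by auto
  ultimately have "model g e \<inter> ball y \<delta> \<subseteq> int_X g e T"
    unfolding int_X_def by (rule interior_of_maximal)
  then show ?thesis using y d by auto
qed

lemma dense_int:
  assumes F: "\<forall>(H', Z')\<in>F. halfspace_of g e H' Z'" and lf: "locfin_family g e (fst ` F)"
    and T: "T = model g e \<inter> \<Inter>(snd ` F)"
    and q: "q \<in> int_X g e T" and x: "x \<in> T" and r: "r > 0"
  shows "int_X g e T \<inter> ball x r \<noteq> {}"
proof -
  have xm: "x \<in> model g e" using x T by auto
  obtain \<epsilon> where eps: "\<epsilon> > 0" "\<forall>z. dist z x < \<epsilon> \<longrightarrow> z \<in> UU g e \<and> rn g e z \<in> ball x r"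
    using ball_rn[OF xm, of "ball x r"] r by auto
  define t where "t = min (1/2) (\<epsilon> / (2 * (norm (q - x) + 1)))"
  have pos: "2 * (norm (q - x) + 1) > 0" by (smt (verit) norm_ge_zero)
  have t: "0 < t" "t < 1" using eps pos by (auto simp: t_def)
  have "t * norm (q - x) < \<epsilon>"
  proof -
    have "t * norm (q - x) \<le> (\<epsilon> / (2 * (norm (q - x) + 1))) * (norm (q - x) + 1)"
    proof (rule mult_mono)
      show "t \<le> \<epsilon> / (2 * (norm (q - x) + 1))" by (simp add: t_def)
      show "0 \<le> \<epsilon> / (2 * (norm (q - x) + 1))" using eps pos by simp
    qed simp_all
    also have "\<dots> = \<epsilon> / 2" using pos by (simp add: field_simps)
    finally show ?thesis using eps by simp
  qed
  define z where "z = x + t *\<^sub>R (q - x)"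
  have "dist z x < \<epsilon>" using \<open>t * norm (q - x) < \<epsilon>\<close> t by (simp add: z_def dist_norm)
  then have zU: "z \<in> UU g e" and zr: "rn g e z \<in> ball x r" using eps by auto
  obtain k where k: "k > 0" "rn g e z = k *\<^sub>R z" using rn_scale[OF zU] by blast
  have qp: "\<forall>(H', Z')\<in>F. q \<in> Z' - H'" using int_pos[OF F T q] .
  have key: "rn g e z \<in> Z' - H'" if HZ: "(H', Z') \<in> F" for H' Z'
  proof -
    obtain a where a: "a \<noteq> 0" "H' = model g e \<inter> {x. a \<bullet> x = 0}" "Z' = model g e \<inter> {x. a \<bullet> x \<ge> 0}"
      using halfspace_char F HZ by blast
    have "a \<bullet> x \<ge> 0" using x T HZ a by force
    moreover have "a \<bullet> q > 0" using qp HZ a by force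
    moreover have "a \<bullet> z = (1 - t) * (a \<bullet> x) + t * (a \<bullet> q)"
      by (simp add: z_def inner_add_right inner_diff_right algebra_simps)
    moreover have "(1 - t) * (a \<bullet> x) \<ge> 0" using t \<open>a \<bullet> x \<ge> 0\<close> by simp
    moreover have "t * (a \<bullet> q) > 0" using t \<open>a \<bullet> q > 0\<close> by simp
    ultimately have "a \<bullet> z > 0" by linarith
    then have "a \<bullet> rn g e z > 0" using k by simp
    then show "rn g e z \<in> Z' - H'" using a rn_in_model[OF zU] by auto
  qed
  then have "\<forall>(H', Z')\<in>F. rn g e z \<in> Z' - H'" by blast
  then have "rn g e z \<in> int_X g e T" using allpos_int[OF F lf T rn_in_model[OF zU]] by blast
  then show ?thesis using zr by auto
qed

lemma open_sides:
  assumes V: "openin (top_of_set (model g e)) V" and w: "w \<in> V" and a: "a \<noteq> 0"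
  shows "\<exists>y\<in>V. a \<bullet> y \<noteq> 0"
proof (cases "a \<bullet> w = 0")
  case False then show ?thesis using w by auto
next
  case True
  obtain W where W: "open W" "V = model g e \<inter> W" using V openin_open by blast
  then show ?thesis using both_sides[of w W a] w a True by force
qed

lemma perp:
  assumes a: "a \<noteq> 0" and n: "n \<noteq> 0" and o: "\<forall>v. a \<bullet> v = 0 \<longrightarrow> n \<bullet> v = 0"
  shows "\<exists>c. c \<noteq> 0 \<and> n = c *\<^sub>R a"
proof -
  define c where "c = (n \<bullet> a) / (a \<bullet> a)"
  define v where "v = n - c *\<^sub>R a"
  have aa: "a \<bullet> a \<noteq> 0" using a by simp
  have av: "a \<bullet> v = 0" using aa by (simp add: v_def c_def inner_diff_right inner_commute)
  then have nv: "n \<bullet> v = 0" using o by blast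
  have "v \<bullet> v = n \<bullet> v - c * (a \<bullet> v)" by (simp add: v_def inner_diff_left)
  then have "v \<bullet> v = 0" using av nv by simp
  then have "v = 0" by simp
  then have "n = c *\<^sub>R a" by (simp add: v_def)
  moreover then have "c \<noteq> 0" using n by auto
  ultimately show ?thesis by blast
qed

lemma star_lemma:
  assumes hs: "halfspace_of g e H' Z'" and a: "a \<noteq> 0"
    and ortho: "\<And>n. n \<noteq> 0 \<Longrightarrow> H' = model g e \<inter> {x. n \<bullet> x = 0} \<Longrightarrow> Z' = model g e \<inter> {x. n \<bullet> x \<ge> 0}
        \<Longrightarrow> \<forall>v. a \<bullet> v = 0 \<longrightarrow> n \<bullet> v = 0"
  shows "H' = model g e \<inter> {x. a \<bullet> x = 0} \<and>
         (Z' = model g e \<inter> {x. a \<bullet> x \<ge> 0} \<or> Z' = model g e \<inter> {x. a \<bullet> x \<le> 0})"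
proof -
  obtain n where n: "n \<noteq> 0" "H' = model g e \<inter> {x. n \<bullet> x = 0}" "Z' = model g e \<inter> {x. n \<bullet> x \<ge> 0}"
    using halfspace_char[OF hs] by blast
  obtain c where c: "c \<noteq> 0" "n = c *\<^sub>R a" using perp[OF a n(1) ortho[OF n]] by blast
  have "H' = model g e \<inter> {x. a \<bullet> x = 0}" using n c by auto
  moreover have "Z' = model g e \<inter> {x. a \<bullet> x \<ge> 0} \<or> Z' = model g e \<inter> {x. a \<bullet> x \<le> 0}"
  proof (cases "c > 0")
    case True
    then have "Z' = model g e \<inter> {x. a \<bullet> x \<ge> 0}" using n c by (auto simp: zero_le_mult_iff)
    then show ?thesis by blast
  next
    case False
    then have "c < 0" using c by simp
    then have "Z' = model g e \<inter> {x. a \<bullet> x \<le> 0}" using n c by (auto simp: zero_le_mult_iff)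
    then show ?thesis by blast
  qed
  ultimately show ?thesis by blast
qed

lemma localstruct:
  assumes F: "\<forall>(H', Z')\<in>F. halfspace_of g e H' Z'" and lf: "locfin_family g e (fst ` F)"
    and T: "T = model g e \<inter> \<Inter>(snd ` F)" and x: "x \<in> T"
    and star: "\<forall>(H', Z')\<in>F. x \<in> H' \<longrightarrow> H' = model g e \<inter> {x. a \<bullet> x = 0} \<and>
         (Z' = model g e \<inter> {x. a \<bullet> x \<ge> 0} \<or> Z' = model g e \<inter> {x. a \<bullet> x \<le> 0})"
  shows "\<exists>\<delta>>0. (\<not> T \<subseteq> model g e \<inter> {x. a \<bullet> x \<le> 0} \<longrightarrow> model g e \<inter> ball x \<delta> \<inter> {y. a \<bullet> y \<ge> 0} \<subseteq> T)
     \<and> (\<not> T \<subseteq> model g e \<inter> {x. a \<bullet> x \<ge> 0} \<longrightarrow> model g e \<inter> ball x \<delta> \<inter> {y. a \<bullet> y \<le> 0} \<subseteq> T)"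
proof -
  have xm: "x \<in> model g e" using x T by auto
  have xZ: "\<forall>(H', Z')\<in>F. x \<in> Z'" using x T by auto
  obtain \<delta> where d: "\<delta> > 0" "\<forall>(H', Z')\<in>F. x \<notin> H' \<longrightarrow> model g e \<inter> ball x \<delta> \<subseteq> Z' - H'"
    using near[OF F lf xm xZ] by blast
  have TZ: "T \<subseteq> Z'" if "(H', Z') \<in> F" for H' Z' using T that by force
  have A: "model g e \<inter> ball x \<delta> \<inter> {y. a \<bullet> y \<ge> 0} \<subseteq> T" if nT: "\<not> T \<subseteq> model g e \<inter> {x. a \<bullet> x \<le> 0}"
  proof
    fix y assume y: "y \<in> model g e \<inter> ball x \<delta> \<inter> {y. a \<bullet> y \<ge> 0}"
    have "y \<in> Z'" if HZ: "(H', Z') \<in> F" for H' Z'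
    proof (cases "x \<in> H'")
      case False then show ?thesis using d HZ y by blast
    next
      case True
      then have "Z' = model g e \<inter> {x. a \<bullet> x \<ge> 0} \<or> Z' = model g e \<inter> {x. a \<bullet> x \<le> 0}"
        using star HZ by blast
      then show ?thesis using TZ[OF HZ] nT y by auto
    qed
    then show "y \<in> T" using T y by auto
  qed
  have B: "model g e \<inter> ball x \<delta> \<inter> {y. a \<bullet> y \<le> 0} \<subseteq> T" if nT: "\<not> T \<subseteq> model g e \<inter> {x. a \<bullet> x \<ge> 0}"
  proof
    fix y assume y: "y \<in> model g e \<inter> ball x \<delta> \<inter> {y. a \<bullet> y \<le> 0}"
    have "y \<in> Z'" if HZ: "(H', Z') \<in> F" for H' Z'
    proof (cases "x \<in> H'")
      case False then show ?thesis using d HZ y by blast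
    next
      case True
      then have "Z' = model g e \<inter> {x. a \<bullet> x \<ge> 0} \<or> Z' = model g e \<inter> {x. a \<bullet> x \<le> 0}"
        using star HZ by blast
      then show ?thesis using TZ[OF HZ] nT y by auto
    qed
    then show "y \<in> T" using T y by auto
  qed
  show ?thesis using A B d(1) by blast
qed

lemma thick_unpack:
  assumes "thick g e T"
  obtains F where "\<forall>(H', Z')\<in>F. halfspace_of g e H' Z'" "locfin_family g e (fst ` F)"
    "T = model g e \<inter> \<Inter>(snd ` F)" "int_X g e T \<noteq> {}"
  using assms unfolding thick_def polyhedron_g_def by blast

lemma thick_not_in:
  assumes "thick g e T" and a: "a \<noteq> 0"
  shows "\<not> T \<subseteq> model g e \<inter> {x. a \<bullet> x = 0}"
proof
  assume sub: "T \<subseteq> model g e \<inter> {x. a \<bullet> x = 0}"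
  obtain w where w: "w \<in> int_X g e T" using assms unfolding thick_def by blast
  have "openin (top_of_set (model g e)) (int_X g e T)" unfolding int_X_def by simp
  then obtain y where "y \<in> int_X g e T" "a \<bullet> y \<noteq> 0" using open_sides[of "int_X g e T" w a] w a by blast
  moreover have "int_X g e T \<subseteq> T" unfolding int_X_def by (rule interior_of_subset)
  ultimately show False using sub by auto
qed

lemma sub_int:
  assumes "open W" "model g e \<inter> W \<subseteq> T"
  shows "model g e \<inter> W \<subseteq> int_X g e T"
  unfolding int_X_def using assms by (intro interior_of_maximal) auto

lemma ortho_at:
  assumes x: "x \<in> model g e" and ax: "a \<bullet> x = 0" and O: "open W" "x \<in> W"
    and sub: "model g e \<inter> {y. a \<bullet> y = 0} \<inter> W \<subseteq> model g e \<inter> {y. n \<bullet> y \<ge> 0}"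
    and nx: "n \<bullet> x = 0"
  shows "\<forall>v. a \<bullet> v = 0 \<longrightarrow> n \<bullet> v = 0"
proof (intro allI impI)
  fix v assume av: "a \<bullet> v = 0"
  obtain \<epsilon> where eps: "\<epsilon> > 0" "\<forall>z. dist z x < \<epsilon> \<longrightarrow> z \<in> UU g e \<and> rn g e z \<in> W"
    using ball_rn[OF x O] by blast
  define t where "t = \<epsilon> / (2 * (norm v + 1))"
  have pos: "2 * (norm v + 1) > 0" by (smt (verit) norm_ge_zero)
  have t: "t > 0" using eps pos by (simp add: t_def)
  have tv: "t * norm v < \<epsilon>"
  proof -
    have "t * norm v \<le> t * (norm v + 1)" using t by simp
    also have "\<dots> = \<epsilon> / 2" unfolding t_def using pos by (simp add: field_simps)
    finally show ?thesis using eps by simp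
  qed
  have ge: "n \<bullet> (x + s *\<^sub>R v) \<ge> 0" if s: "\<bar>s\<bar> = t" for s
  proof -
    have "dist (x + s *\<^sub>R v) x < \<epsilon>" using tv s by (simp add: dist_norm)
    then have zU: "x + s *\<^sub>R v \<in> UU g e" and zW: "rn g e (x + s *\<^sub>R v) \<in> W" using eps by auto
    obtain k where k: "k > 0" "rn g e (x + s *\<^sub>R v) = k *\<^sub>R (x + s *\<^sub>R v)" using rn_scale[OF zU] by blast
    have "a \<bullet> rn g e (x + s *\<^sub>R v) = 0" using k ax av by (simp add: inner_add_right)
    then have "rn g e (x + s *\<^sub>R v) \<in> model g e \<inter> {y. a \<bullet> y = 0} \<inter> W" using zW rn_in_model[OF zU] by auto
    then have "n \<bullet> rn g e (x + s *\<^sub>R v) \<ge> 0" using sub by auto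
    then show ?thesis using k by (simp add: zero_le_mult_iff)
  qed
  have "t * (n \<bullet> v) \<ge> 0" using ge[of t] t nx by (simp add: inner_add_right)
  moreover have "- t * (n \<bullet> v) \<ge> 0" using ge[of "-t"] t nx by (simp add: inner_add_right inner_diff_right)
  ultimately show "n \<bullet> v = 0" using t by (smt (verit) mult_pos_pos mult_minus_left zero_less_mult_iff)
qed

lemma oriented:
  assumes tess: "partial_tessellation g e \<T>" and T1: "T1 \<in> \<T>" and T2: "T2 \<in> \<T>"
    and a: "a \<noteq> 0" and Hd: "gspan g e (T1 \<inter> T2) = model g e \<inter> {x. a \<bullet> x = 0}"
    and hyp: "ghyperplane g e (gspan g e (T1 \<inter> T2))"
    and T1Z: "T1 \<subseteq> model g e \<inter> {x. a \<bullet> x \<ge> 0}" and T2Z: "T2 \<subseteq> model g e \<inter> {x. a \<bullet> x \<le> 0}"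
    and p: "p \<in> model g e" "a \<bullet> p = 0" and dl: "\<delta> > 0"
    and pb: "model g e \<inter> {x. a \<bullet> x = 0} \<inter> ball p \<delta> \<subseteq> T1 \<inter> T2"
    and codim: "set_codim g e (T1 \<inter> T2) = 1" and nem: "T1 \<inter> T2 \<noteq> {}"
  shows "essential_hyperplane g e T1 (gspan g e (T1 \<inter> T2))
       \<and> essential_hyperplane g e T2 (gspan g e (T1 \<inter> T2))
       \<and> (\<exists>Z1 Z2. halfspace_of g e (gspan g e (T1 \<inter> T2)) Z1
               \<and> halfspace_of g e (gspan g e (T1 \<inter> T2)) Z2
               \<and> Z1 \<noteq> Z2 \<and> T1 \<subseteq> Z1 \<and> T2 \<subseteq> Z2)
       \<and> (\<forall>T \<in> \<T>. T \<noteq> T1 \<and> T \<noteq> T2 \<longrightarrow> relint_g g e (T1 \<inter> T2) \<inter> T = {})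
       \<and> side g e \<T> (T1 \<inter> T2)"
proof -
  define H where "H = gspan g e (T1 \<inter> T2)"
  have Hd': "H = model g e \<inter> {x. a \<bullet> x = 0}" using Hd by (simp add: H_def)
  have th1: "thick g e T1" and th2: "thick g e T2" using tess T1 T2 unfolding partial_tessellation_def by auto
  have hsp: "halfspace_of g e H (model g e \<inter> {x. a \<bullet> x \<ge> 0})"
    using halfspace_intro[OF hyp a Hd] by (simp add: H_def)
  have "halfspace_of g e H (model g e \<inter> {x. (-a) \<bullet> x \<ge> 0})"
    using halfspace_intro[of "gspan g e (T1 \<inter> T2)" "-a"] hyp a Hd by (simp add: H_def)
  moreover have "model g e \<inter> {x. (-a) \<bullet> x \<ge> 0} = model g e \<inter> {x. a \<bullet> x \<le> 0}" by auto
  ultimately have hsm: "halfspace_of g e H (model g e \<inter> {x. a \<bullet> x \<le> 0})" by simp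
  obtain y where y: "y \<in> model g e" "a \<bullet> y > 0" using both_sides[of p UNIV a] p a by auto
  then have neq: "model g e \<inter> {x. a \<bullet> x \<ge> 0} \<noteq> model g e \<inter> {x. a \<bullet> x \<le> 0}"
    by (metis (mono_tags, lifting) IntD2 IntI less_le_not_le mem_Collect_eq)
  have op: "openin (top_of_set H) (H \<inter> ball p \<delta>)" by auto
  have pH: "p \<in> H \<inter> ball p \<delta>" using p dl Hd' by auto
  have i1: "top_of_set H interior_of (T1 \<inter> H) \<noteq> {}"
  proof -
    have "H \<inter> ball p \<delta> \<subseteq> T1 \<inter> H" using pb Hd' by auto
    then have "H \<inter> ball p \<delta> \<subseteq> top_of_set H interior_of (T1 \<inter> H)" using op by (rule interior_of_maximal)
    then show ?thesis using pH by auto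
  qed
  have i2: "top_of_set H interior_of (T2 \<inter> H) \<noteq> {}"
  proof -
    have "H \<inter> ball p \<delta> \<subseteq> T2 \<inter> H" using pb Hd' by auto
    then have "H \<inter> ball p \<delta> \<subseteq> top_of_set H interior_of (T2 \<inter> H)" using op by (rule interior_of_maximal)
    then show ?thesis using pH by auto
  qed
  have ess1: "essential_hyperplane g e T1 H" unfolding essential_hyperplane_def
    using hsp T1Z i1 by blast
  have ess2: "essential_hyperplane g e T2 H" unfolding essential_hyperplane_def
    using hsm T2Z i2 by blast
  have ex: "\<exists>Z1 Z2. halfspace_of g e H Z1 \<and> halfspace_of g e H Z2 \<and> Z1 \<noteq> Z2 \<and> T1 \<subseteq> Z1 \<and> T2 \<subseteq> Z2"
    using hsp hsm neq T1Z T2Z by blast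
  have nT1: "\<not> T1 \<subseteq> model g e \<inter> {x. a \<bullet> x \<le> 0}"
  proof
    assume "T1 \<subseteq> model g e \<inter> {x. a \<bullet> x \<le> 0}"
    then have "T1 \<subseteq> model g e \<inter> {x. a \<bullet> x = 0}" using T1Z by (auto simp: subset_iff intro: antisym)
    then show False using thick_not_in[OF th1 a] by simp
  qed
  have nT2: "\<not> T2 \<subseteq> model g e \<inter> {x. a \<bullet> x \<ge> 0}"
  proof
    assume "T2 \<subseteq> model g e \<inter> {x. a \<bullet> x \<ge> 0}"
    then have "T2 \<subseteq> model g e \<inter> {x. a \<bullet> x = 0}" using T2Z by (auto simp: subset_iff intro: antisym)
    then show False using thick_not_in[OF th2 a] by simp
  qed
  have rel: "relint_g g e (T1 \<inter> T2) \<inter> T = {}" if T: "T \<in> \<T>" "T \<noteq> T1" "T \<noteq> T2" for T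
  proof (rule ccontr)
    assume "relint_g g e (T1 \<inter> T2) \<inter> T \<noteq> {}"
    then obtain x where xr: "x \<in> top_of_set H interior_of (T1 \<inter> T2)" and xT: "x \<in> T"
      unfolding relint_g_def H_def by blast
    obtain V where V: "openin (top_of_set H) V" "x \<in> V" "V \<subseteq> T1 \<inter> T2"
      using xr unfolding interior_of_def by blast
    obtain Ob where Ob: "open Ob" "V = H \<inter> Ob" using V(1) openin_open by blast
    have xm: "x \<in> model g e" and ax: "a \<bullet> x = 0" and xO: "x \<in> Ob" using V Ob Hd' by auto
    have HO: "model g e \<inter> {y. a \<bullet> y = 0} \<inter> Ob \<subseteq> T1 \<inter> T2" using V Ob Hd' by auto
    have starT: "\<forall>(H', Z')\<in>F. x \<in> H' \<longrightarrow> H' = model g e \<inter> {x. a \<bullet> x = 0} \<and>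
         (Z' = model g e \<inter> {x. a \<bullet> x \<ge> 0} \<or> Z' = model g e \<inter> {x. a \<bullet> x \<le> 0})"
      if F: "\<forall>(H', Z')\<in>F. halfspace_of g e H' Z'" and Teq: "Ti = model g e \<inter> \<Inter>(snd ` F)"
        and Ti: "T1 \<inter> T2 \<subseteq> Ti" for F Ti
    proof (clarify)
      fix H' Z' assume HZ: "(H', Z') \<in> F" and xH: "x \<in> H'"
      have hs: "halfspace_of g e H' Z'" using F HZ by blast
      show "H' = model g e \<inter> {x. a \<bullet> x = 0} \<and>
         (Z' = model g e \<inter> {x. a \<bullet> x \<ge> 0} \<or> Z' = model g e \<inter> {x. a \<bullet> x \<le> 0})"
      proof (rule star_lemma[OF hs a])
        fix n assume n: "n \<noteq> 0" "H' = model g e \<inter> {x. n \<bullet> x = 0}" "Z' = model g e \<inter> {x. n \<bullet> x \<ge> 0}"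
        have "Ti \<subseteq> Z'" using Teq HZ by force
        then have sub: "model g e \<inter> {y. a \<bullet> y = 0} \<inter> Ob \<subseteq> model g e \<inter> {y. n \<bullet> y \<ge> 0}"
          using HO Ti n by auto
        have "n \<bullet> x = 0" using xH n by auto
        then show "\<forall>v. a \<bullet> v = 0 \<longrightarrow> n \<bullet> v = 0" using ortho_at[OF xm ax Ob(1) xO sub] by blast
      qed
    qed
    obtain F1 where F1: "\<forall>(H', Z')\<in>F1. halfspace_of g e H' Z'" "locfin_family g e (fst ` F1)"
      "T1 = model g e \<inter> \<Inter>(snd ` F1)" using thick_unpack[OF th1] by blast
    obtain F2 where F2: "\<forall>(H', Z')\<in>F2. halfspace_of g e H' Z'" "locfin_family g e (fst ` F2)"
      "T2 = model g e \<inter> \<Inter>(snd ` F2)" using thick_unpack[OF th2] by blast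
    have xT1: "x \<in> T1" and xT2: "x \<in> T2" using V by auto
    obtain d1 where d1: "d1 > 0" "model g e \<inter> ball x d1 \<inter> {y. a \<bullet> y \<ge> 0} \<subseteq> T1"
      using localstruct[OF F1 xT1 starT[OF F1(1) F1(3)]] nT1 by blast
    obtain d2 where d2: "d2 > 0" "model g e \<inter> ball x d2 \<inter> {y. a \<bullet> y \<le> 0} \<subseteq> T2"
      using localstruct[OF F2 xT2 starT[OF F2(1) F2(3)]] nT2 by blast
    define r where "r = min d1 d2"
    have r: "r > 0" using d1 d2 by (simp add: r_def)
    have thT: "thick g e T" using tess T unfolding partial_tessellation_def by auto
    obtain F where F: "\<forall>(H', Z')\<in>F. halfspace_of g e H' Z'" "locfin_family g e (fst ` F)"
      "T = model g e \<inter> \<Inter>(snd ` F)" "int_X g e T \<noteq> {}" using thick_unpack[OF thT] by blast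
    obtain q where q: "q \<in> int_X g e T" using F(4) by blast
    obtain w where w: "w \<in> int_X g e T \<inter> ball x r" using dense_int[OF F(1-3) q xT r] by blast
    have "int_X g e T \<subseteq> T" unfolding int_X_def by (rule interior_of_subset)
    then have eqV: "int_X g e T \<inter> ball x r = int_X g e T \<inter> (model g e \<inter> ball x r)" using F(3) by auto
    have oV: "openin (top_of_set (model g e)) (int_X g e T \<inter> ball x r)"
      unfolding eqV unfolding int_X_def by (intro openin_Int openin_interior_of openin_open_Int) auto
    obtain z where z: "z \<in> int_X g e T \<inter> ball x r" "a \<bullet> z \<noteq> 0" using open_sides[OF oV w a] by blast
    have zm: "z \<in> model g e" using oV z openin_subset by fastforce
    have dis1: "int_X g e T \<inter> int_X g e T1 = {}" and dis2: "int_X g e T \<inter> int_X g e T2 = {}"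
      using tess T T1 T2 unfolding partial_tessellation_def by auto
    show False
    proof (cases "a \<bullet> z > 0")
      case True
      have "model g e \<inter> (ball x r \<inter> {y. a \<bullet> y > 0}) \<subseteq> T1" using d1 by (auto simp: r_def)
      then have "model g e \<inter> (ball x r \<inter> {y. a \<bullet> y > 0}) \<subseteq> int_X g e T1"
        by (intro sub_int) (auto intro: open_Int open_halfspace_gt)
      then show False using z zm True dis1 by auto
    next
      case False
      then have neg: "a \<bullet> z < 0" using z by simp
      have "model g e \<inter> (ball x r \<inter> {y. a \<bullet> y < 0}) \<subseteq> T2" using d2 by (auto simp: r_def)
      then have "model g e \<inter> (ball x r \<inter> {y. a \<bullet> y < 0}) \<subseteq> int_X g e T2"
        by (intro sub_int) (auto intro: open_Int open_halfspace_lt)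
      then show False using z zm neg dis2 by auto
    qed
  qed
  have sd: "side g e \<T> (T1 \<inter> T2)"
    unfolding side_def cell_def
  proof (intro conjI codim nem ballI)
    show "\<exists>\<S>. \<S> \<noteq> {} \<and> \<S> \<subseteq> \<T> \<and> T1 \<inter> T2 = \<Inter>\<S>"
      using T1 T2 by (intro exI[of _ "{T1, T2}"]) auto
    fix T assume "T \<in> \<T>"
    then show "T1 \<inter> T2 \<subseteq> T \<or> relint_g g e (T1 \<inter> T2) \<inter> T = {}" using rel by blast
  qed
  show ?thesis using ess1 ess2 ex rel sd by (simp add: H_def)
qed

end

theorem lemma4p3:
  fixes g :: geom and e :: "'a::euclidean_space" and \<T> :: "'a set set"
    and T1 T2 :: "'a set"
  assumes "DIM('a) \<ge> 2" and "norm e = 1"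
    and "partial_tessellation g e \<T>" and "locally_finite_tess g e \<T>"
    and "T1 \<in> \<T>" and "T2 \<in> \<T>"
    and "T1 \<inter> T2 \<noteq> {}" and "set_codim g e (T1 \<inter> T2) = 1"
  shows "essential_hyperplane g e T1 (gspan g e (T1 \<inter> T2))
       \<and> essential_hyperplane g e T2 (gspan g e (T1 \<inter> T2))
       \<and> (\<exists>Z1 Z2. halfspace_of g e (gspan g e (T1 \<inter> T2)) Z1
               \<and> halfspace_of g e (gspan g e (T1 \<inter> T2)) Z2
               \<and> Z1 \<noteq> Z2 \<and> T1 \<subseteq> Z1 \<and> T2 \<subseteq> Z2)
       \<and> (\<forall>T \<in> \<T>. T \<noteq> T1 \<and> T \<noteq> T2 \<longrightarrow> relint_g g e (T1 \<inter> T2) \<inter> T = {})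
       \<and> side g e \<T> (T1 \<inter> T2)"
proof -
  note ne = assms(2) and tess = assms(3) and T1 = assms(5) and T2 = assms(6)
    and nem = assms(7) and codim = assms(8)
  define S where "S = T1 \<inter> T2"
  have th1: "thick g e T1" and th2: "thick g e T2" using tess T1 T2 unfolding partial_tessellation_def by auto
  obtain F1 where F1: "\<forall>(H', Z')\<in>F1. halfspace_of g e H' Z'" "locfin_family g e (fst ` F1)"
    "T1 = model g e \<inter> \<Inter>(snd ` F1)" using thick_unpack[OF ne th1] by blast
  obtain F2 where F2: "\<forall>(H', Z')\<in>F2. halfspace_of g e H' Z'" "locfin_family g e (fst ` F2)"
    "T2 = model g e \<inter> \<Inter>(snd ` F2)" using thick_unpack[OF ne th2] by blast
  have Sm: "S \<subseteq> model g e" using F1(3) by (auto simp: S_def)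
  have Sne: "S \<noteq> {}" using nem by (simp add: S_def)
  have gs: "gspan g e S = model g e \<inter> span S" using gspan_eq[OF ne Sne Sm] .
  have gsub: "gsubspace g e (gspan g e S)" unfolding gs gsubspace_def
    using Sne Sm span_superset[of S] by (intro conjI exI[of _ "span S"]) auto
  have hyp: "ghyperplane g e (gspan g e S)" unfolding ghyperplane_def
    using gsub codim by (simp add: S_def set_codim_def)
  obtain a0 where a0: "a0 \<noteq> 0" "gspan g e S = model g e \<inter> {x. a0 \<bullet> x = 0}"
    "span (gspan g e S) = {x. a0 \<bullet> x = 0}" using gsub_hyp[OF ne gsub] hyp unfolding ghyperplane_def by blast
  have spanS: "span S = {x. a0 \<bullet> x = 0}"
  proof -
    have "S \<subseteq> gspan g e S" using gs Sm span_superset[of S] by auto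
    then have "span S \<subseteq> span (gspan g e S)" by (rule span_mono)
    moreover have "span (gspan g e S) \<subseteq> span S" unfolding gs
      by (metis inf_le2 span_mono span_span)
    ultimately show ?thesis using a0 by auto
  qed
  obtain B where B: "B \<subseteq> S" "independent B" "S \<subseteq> span B" using maximal_independent_subset by blast
  have finB: "finite B" using B(2) by (rule finiteI_independent)
  have Bne: "B \<noteq> {}"
  proof
    assume "B = {}"
    then have "S \<subseteq> {0}" using B(3) by simp
    then show False using Sne Sm zero_notin_model[of g e] by auto
  qed
  define m where "m = \<Sum>B"
  have m0: "m \<noteq> 0"
  proof
    assume "m = 0"
    then have "(\<Sum>v\<in>B. (\<lambda>_. 1::real) v *\<^sub>R v) = 0" by (simp add: m_def)
    then have "dependent B" using finB Bne dependent_finite[OF finB] by force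
    then show False using B(2) by simp
  qed
  have mU: "m \<in> UU g e"
  proof (cases g)
    case Euc
    have "m \<bullet> e = (\<Sum>b\<in>B. b \<bullet> e)" by (simp add: m_def inner_sum_left)
    also have "\<dots> = (\<Sum>b\<in>B. 1)" using B(1) Sm Euc by (intro sum.cong) auto
    also have "\<dots> > 0" using finB Bne by (simp add: card_gt_0_iff)
    finally show ?thesis using Euc by (simp add: UU_def)
  next
    case Sph then show ?thesis using m0 by (simp add: UU_def)
  next
    case Hyp
    have "\<Sum>B' \<in> UU Hyp e" if "finite B'" "B' \<noteq> {}" "B' \<subseteq> B" for B'
      using that
    proof (induction B' rule: finite_ne_induct)
      case (singleton x)
      then show ?case using B(1) Sm model_sub_UU[OF ne, of Hyp] Hyp by auto
    next
      case (insert x F)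
      then have "x \<in> UU Hyp e" using B(1) Sm model_sub_UU[OF ne, of Hyp] Hyp by auto
      then show ?case using insert UU_add_Hyp[OF ne] by simp
    qed
    then show ?thesis using finB Bne Hyp by (simp add: m_def)
  qed
  obtain k where k: "k > 0" "rn g e m = k *\<^sub>R m" using rn_scale[OF mU] by blast
  define p where "p = rn g e m"
  have pm: "p \<in> model g e" using rn_in_model[OF mU] by (simp add: p_def)
  have cons: "p \<in> Z' \<and> (p \<in> H' \<longrightarrow> H' = model g e \<inter> {x. a0 \<bullet> x = 0} \<and>
         (Z' = model g e \<inter> {x. a0 \<bullet> x \<ge> 0} \<or> Z' = model g e \<inter> {x. a0 \<bullet> x \<le> 0}))"
    if F: "\<forall>(H', Z')\<in>F. halfspace_of g e H' Z'" and Teq: "Ti = model g e \<inter> \<Inter>(snd ` F)"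
      and Ti: "S \<subseteq> Ti" and HZ: "(H', Z') \<in> F" for F Ti H' Z'
  proof -
    have hs: "halfspace_of g e H' Z'" using F HZ by blast
    have TZ: "Ti \<subseteq> Z'" using Teq HZ by force
    have gen: "n \<bullet> p \<ge> 0 \<and> (n \<bullet> p = 0 \<longrightarrow> (\<forall>v. a0 \<bullet> v = 0 \<longrightarrow> n \<bullet> v = 0))"
      if n: "Z' = model g e \<inter> {x. n \<bullet> x \<ge> 0}" for n
    proof -
      have nb: "\<forall>b\<in>B. n \<bullet> b \<ge> 0" using B(1) Ti TZ n by auto
      have nm: "n \<bullet> m = (\<Sum>b\<in>B. n \<bullet> b)" by (simp add: m_def inner_sum_right)
      have "n \<bullet> m \<ge> 0" unfolding nm using nb by (intro sum_nonneg) auto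
      then have np: "n \<bullet> p \<ge> 0" using k by (simp add: p_def)
      have "\<forall>v. a0 \<bullet> v = 0 \<longrightarrow> n \<bullet> v = 0" if "n \<bullet> p = 0"
      proof -
        have "n \<bullet> m = 0" using that k by (simp add: p_def)
        then have "\<forall>b\<in>B. n \<bullet> b = 0" using nb finB unfolding nm by (simp add: sum_nonneg_eq_0_iff)
        then have "span B \<subseteq> {v. n \<bullet> v = 0}" by (intro span_minimal subspace_hyperplane) auto
        moreover have "span S \<subseteq> span B" using B(3) by (metis span_mono span_span)
        ultimately show ?thesis using spanS by auto
      qed
      then show ?thesis using np by blast
    qed
    obtain n where n: "n \<noteq> 0" "H' = model g e \<inter> {x. n \<bullet> x = 0}" "Z' = model g e \<inter> {x. n \<bullet> x \<ge> 0}"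
      using halfspace_char[OF ne hs] by blast
    have "p \<in> Z'" using gen[OF n(3)] n pm by auto
    moreover have "H' = model g e \<inter> {x. a0 \<bullet> x = 0} \<and>
         (Z' = model g e \<inter> {x. a0 \<bullet> x \<ge> 0} \<or> Z' = model g e \<inter> {x. a0 \<bullet> x \<le> 0})" if pH: "p \<in> H'"
    proof (rule star_lemma[OF ne hs a0(1)])
      fix n' assume n': "n' \<noteq> 0" "H' = model g e \<inter> {x. n' \<bullet> x = 0}" "Z' = model g e \<inter> {x. n' \<bullet> x \<ge> 0}"
      have "n' \<bullet> p = 0" using pH n' by auto
      then show "\<forall>v. a0 \<bullet> v = 0 \<longrightarrow> n' \<bullet> v = 0" using gen[OF n'(3)] by blast
    qed
    ultimately show ?thesis by blast
  qed
  have S1: "S \<subseteq> T1" and S2: "S \<subseteq> T2" by (auto simp: S_def)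
  have pT1: "p \<in> T1" using cons[OF F1(1) F1(3) S1] pm F1(3) by auto
  have pT2: "p \<in> T2" using cons[OF F2(1) F2(3) S2] pm F2(3) by auto
  have star1: "\<forall>(H', Z')\<in>F1. p \<in> H' \<longrightarrow> H' = model g e \<inter> {x. a0 \<bullet> x = 0} \<and>
         (Z' = model g e \<inter> {x. a0 \<bullet> x \<ge> 0} \<or> Z' = model g e \<inter> {x. a0 \<bullet> x \<le> 0})"
    using cons[OF F1(1) F1(3) S1] by blast
  have star2: "\<forall>(H', Z')\<in>F2. p \<in> H' \<longrightarrow> H' = model g e \<inter> {x. a0 \<bullet> x = 0} \<and>
         (Z' = model g e \<inter> {x. a0 \<bullet> x \<ge> 0} \<or> Z' = model g e \<inter> {x. a0 \<bullet> x \<le> 0})"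
    using cons[OF F2(1) F2(3) S2] by blast
  obtain d1 where d1: "d1 > 0"
    "\<not> T1 \<subseteq> model g e \<inter> {x. a0 \<bullet> x \<le> 0} \<longrightarrow> model g e \<inter> ball p d1 \<inter> {y. a0 \<bullet> y \<ge> 0} \<subseteq> T1"
    "\<not> T1 \<subseteq> model g e \<inter> {x. a0 \<bullet> x \<ge> 0} \<longrightarrow> model g e \<inter> ball p d1 \<inter> {y. a0 \<bullet> y \<le> 0} \<subseteq> T1"
    using localstruct[OF ne F1(1-3) pT1 star1] by blast
  obtain d2 where d2: "d2 > 0"
    "\<not> T2 \<subseteq> model g e \<inter> {x. a0 \<bullet> x \<le> 0} \<longrightarrow> model g e \<inter> ball p d2 \<inter> {y. a0 \<bullet> y \<ge> 0} \<subseteq> T2"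
    "\<not> T2 \<subseteq> model g e \<inter> {x. a0 \<bullet> x \<ge> 0} \<longrightarrow> model g e \<inter> ball p d2 \<inter> {y. a0 \<bullet> y \<le> 0} \<subseteq> T2"
    using localstruct[OF ne F2(1-3) pT2 star2] by blast
  define \<delta> where "\<delta> = min d1 d2"
  have dl: "\<delta> > 0" using d1 d2 by (simp add: \<delta>_def)
  have pS: "p \<in> S" using pT1 pT2 by (simp add: S_def)
  have ap: "a0 \<bullet> p = 0" using pS spanS span_superset[of S] by auto
  define Wp where "Wp = model g e \<inter> (ball p \<delta> \<inter> {y. a0 \<bullet> y > 0})"
  define Wm where "Wm = model g e \<inter> (ball p \<delta> \<inter> {y. a0 \<bullet> y < 0})"
  have Wpne: "Wp \<noteq> {}" and Wmne: "Wm \<noteq> {}"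
    using both_sides[OF ne pm, of "ball p \<delta>" a0] dl a0(1) ap by (auto simp: Wp_def Wm_def)
  have oWp: "open (ball p \<delta> \<inter> {y. a0 \<bullet> y > 0})" by (intro open_Int open_halfspace_gt) auto
  have oWm: "open (ball p \<delta> \<inter> {y. a0 \<bullet> y < 0})" by (intro open_Int open_halfspace_lt) auto
  have nb1: "\<not> (T1 \<subseteq> model g e \<inter> {x. a0 \<bullet> x \<ge> 0} \<and> T1 \<subseteq> model g e \<inter> {x. a0 \<bullet> x \<le> 0})"
  proof
    assume "T1 \<subseteq> model g e \<inter> {x. a0 \<bullet> x \<ge> 0} \<and> T1 \<subseteq> model g e \<inter> {x. a0 \<bullet> x \<le> 0}"
    then have "T1 \<subseteq> model g e \<inter> {x. a0 \<bullet> x = 0}" by (auto simp: subset_iff intro: antisym)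
    then show False using thick_not_in[OF ne th1 a0(1)] by simp
  qed
  have nb2: "\<not> (T2 \<subseteq> model g e \<inter> {x. a0 \<bullet> x \<ge> 0} \<and> T2 \<subseteq> model g e \<inter> {x. a0 \<bullet> x \<le> 0})"
  proof
    assume "T2 \<subseteq> model g e \<inter> {x. a0 \<bullet> x \<ge> 0} \<and> T2 \<subseteq> model g e \<inter> {x. a0 \<bullet> x \<le> 0}"
    then have "T2 \<subseteq> model g e \<inter> {x. a0 \<bullet> x = 0}" by (auto simp: subset_iff intro: antisym)
    then show False using thick_not_in[OF ne th2 a0(1)] by simp
  qed
  have T12: "T1 \<noteq> T2"
  proof
    assume "T1 = T2"
    then have "T1 \<subseteq> model g e \<inter> {x. a0 \<bullet> x = 0}" using gs a0(2) span_superset[of S] Sm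
      by (auto simp: S_def)
    then show False using thick_not_in[OF ne th1 a0(1)] by simp
  qed
  have dis: "int_X g e T1 \<inter> int_X g e T2 = {}" using tess T1 T2 T12 unfolding partial_tessellation_def by auto
  have L1p: "Wp \<subseteq> int_X g e T1" if "\<not> T1 \<subseteq> model g e \<inter> {x. a0 \<bullet> x \<le> 0}"
    unfolding Wp_def using d1(2) that by (intro sub_int[OF ne oWp]) (auto simp: \<delta>_def)
  have L1m: "Wm \<subseteq> int_X g e T1" if "\<not> T1 \<subseteq> model g e \<inter> {x. a0 \<bullet> x \<ge> 0}"
    unfolding Wm_def using d1(3) that by (intro sub_int[OF ne oWm]) (auto simp: \<delta>_def)
  have L2p: "Wp \<subseteq> int_X g e T2" if "\<not> T2 \<subseteq> model g e \<inter> {x. a0 \<bullet> x \<le> 0}"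
    unfolding Wp_def using d2(2) that by (intro sub_int[OF ne oWp]) (auto simp: \<delta>_def)
  have L2m: "Wm \<subseteq> int_X g e T2" if "\<not> T2 \<subseteq> model g e \<inter> {x. a0 \<bullet> x \<ge> 0}"
    unfolding Wm_def using d2(3) that by (intro sub_int[OF ne oWm]) (auto simp: \<delta>_def)
  have hypS: "ghyperplane g e (gspan g e (T1 \<inter> T2))" using hyp by (simp add: S_def)
  show ?thesis
  proof (cases "T1 \<subseteq> model g e \<inter> {x. a0 \<bullet> x \<le> 0}")
    case False
    then have "Wp \<subseteq> int_X g e T1" by (rule L1p)
    then have "\<not> Wp \<subseteq> int_X g e T2" using dis Wpne by blast
    then have T2m: "T2 \<subseteq> model g e \<inter> {x. a0 \<bullet> x \<le> 0}" using L2p by blast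
    then have T2p: "\<not> T2 \<subseteq> model g e \<inter> {x. a0 \<bullet> x \<ge> 0}" using nb2 by blast
    then have "Wm \<subseteq> int_X g e T2" by (rule L2m)
    then have "\<not> Wm \<subseteq> int_X g e T1" using dis Wmne by blast
    then have T1p: "T1 \<subseteq> model g e \<inter> {x. a0 \<bullet> x \<ge> 0}" using L1m by blast
    have pb: "model g e \<inter> {x. a0 \<bullet> x = 0} \<inter> ball p \<delta> \<subseteq> T1 \<inter> T2"
      using d1(2) d2(3) False T2p by (auto simp: \<delta>_def)
    show ?thesis
      by (rule oriented[OF ne tess T1 T2 a0(1) _ hypS T1p T2m pm ap dl pb codim nem])
        (use a0(2) in \<open>simp add: S_def\<close>)
  next
    case True
    then have T1m: "\<not> T1 \<subseteq> model g e \<inter> {x. a0 \<bullet> x \<ge> 0}" using nb1 by blast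
    then have "Wm \<subseteq> int_X g e T1" by (rule L1m)
    then have "\<not> Wm \<subseteq> int_X g e T2" using dis Wmne by blast
    then have T2p: "T2 \<subseteq> model g e \<inter> {x. a0 \<bullet> x \<ge> 0}" using L2m by blast
    then have T2m: "\<not> T2 \<subseteq> model g e \<inter> {x. a0 \<bullet> x \<le> 0}" using nb2 by blast
    have pb: "model g e \<inter> {x. a0 \<bullet> x = 0} \<inter> ball p \<delta> \<subseteq> T1 \<inter> T2"
      using d1(3) d2(2) T1m T2m by (auto simp: \<delta>_def)
    have na: "-a0 \<noteq> 0" using a0(1) by simp
    have e1: "model g e \<inter> {x. (-a0) \<bullet> x = 0} = model g e \<inter> {x. a0 \<bullet> x = 0}" by auto
    have e2: "model g e \<inter> {x. (-a0) \<bullet> x \<ge> 0} = model g e \<inter> {x. a0 \<bullet> x \<le> 0}" by auto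
    have e3: "model g e \<inter> {x. (-a0) \<bullet> x \<le> 0} = model g e \<inter> {x. a0 \<bullet> x \<ge> 0}" by auto
    show ?thesis
    proof (rule oriented[OF ne tess T1 T2 na _ hypS _ _ pm _ dl _ codim nem])
      show "gspan g e (T1 \<inter> T2) = model g e \<inter> {x. (-a0) \<bullet> x = 0}" using a0(2) e1 by (simp add: S_def)
      show "T1 \<subseteq> model g e \<inter> {x. (-a0) \<bullet> x \<ge> 0}" using True e2 by simp
      show "T2 \<subseteq> model g e \<inter> {x. (-a0) \<bullet> x \<le> 0}" using T2p e3 by simp
      show "(-a0) \<bullet> p = 0" using ap by simp
      show "model g e \<inter> {x. (-a0) \<bullet> x = 0} \<inter> ball p \<delta> \<subseteq> T1 \<inter> T2" using pb e1 by simp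
    qed
  qed
qed

end
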